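(* Let $A\in\mathbb{R}^{n\times n}$ be nonsingular. Let $A=U-V$ be a convergent regular splitting and let $U=F-G$ be a convergent weak regular splitting of type II such that $VF^{-1}G=GF^{-1}V$. Then the stationary two-stage iterative method is convergent for any initial vector $x_0$; that is, for every positive integer $s$, the matrix $$T_{s}=(F^{-1}G)^{s}+\sum_{j=0}^{s-1}(F^{-1}G)^{j}F^{-1}V$$ satisfies $\rho(T_s)<1$, so that the iterates $x_{k+1}=T_s x_k + \sum_{j=0}^{s-1}(F^{-1}G)^jF^{-1}b$ converge to $A^{-1}b$ for every $x_0$ and every $b$.
   Context: Inequalities between matrices are entrywise. A splitting $A=U-V$ with $U$ nonsingular is regular if $U^{-1}\geq 0$ and $V\geq 0$; it is weak regular of type II if $U^{-1}\geq 0$ and $VU^{-1}\geq 0$. A splitting is convergent if $\rho(U^{-1}V)<1$, where $\rho$ denotes spectral radius. The stationary two-stage method for $Ax=b$ uses outer splitting $A=U-V$ and inner splitting $U=F-G$ with a fixed number $s\ge1$ of inner iterations. *)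

theory Defs
  imports "Jordan_Normal_Form.Spectral_Radius"
begin

definition nonneg_mat :: "real mat \<Rightarrow> bool" where
  "nonneg_mat M = (\<forall>i<dim_row M. \<forall>j<dim_col M. M $$ (i,j) \<ge> 0)"

definition minv :: "real mat \<Rightarrow> real mat" where
  "minv U = (THE B. inverts_mat U B \<and> inverts_mat B U)"

definition rho :: "real mat \<Rightarrow> real" where
  "rho M = spectral_radius (map_mat complex_of_real M)"

fun msum :: "nat \<Rightarrow> (nat \<Rightarrow> real mat) \<Rightarrow> nat \<Rightarrow> real mat" where
  "msum n f 0 = 0\<^sub>m n n"
| "msum n f (Suc k) = msum n f k + f k"

definition regular_splitting :: "nat \<Rightarrow> real mat \<Rightarrow> real mat \<Rightarrow> real mat \<Rightarrow> bool" where
  "regular_splitting n A U V \<longleftrightarrow> A \<in> carrier_mat n n \<and> U \<in> carrier_mat n n \<and> V \<in> carrier_mat n n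
     \<and> A = U - V \<and> invertible_mat U \<and> nonneg_mat (minv U) \<and> nonneg_mat V"

definition weak_regular_splitting_II :: "nat \<Rightarrow> real mat \<Rightarrow> real mat \<Rightarrow> real mat \<Rightarrow> bool" where
  "weak_regular_splitting_II n A U V \<longleftrightarrow> A \<in> carrier_mat n n \<and> U \<in> carrier_mat n n \<and> V \<in> carrier_mat n n
     \<and> A = U - V \<and> invertible_mat U \<and> nonneg_mat (minv U) \<and> nonneg_mat (V * minv U)"

definition convergent_splitting :: "real mat \<Rightarrow> real mat \<Rightarrow> bool" where
  "convergent_splitting U V \<longleftrightarrow> rho (minv U * V) < 1"

definition two_stage_T :: "nat \<Rightarrow> real mat \<Rightarrow> real mat \<Rightarrow> real mat \<Rightarrow> nat \<Rightarrow> real mat" where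
  "two_stage_T n F G V s =
     (minv F * G) ^\<^sub>m s + msum n (\<lambda>j. (minv F * G) ^\<^sub>m j * minv F * V) s"

definition two_stage_c :: "nat \<Rightarrow> real mat \<Rightarrow> real mat \<Rightarrow> nat \<Rightarrow> real vec \<Rightarrow> real vec" where
  "two_stage_c n F G s b = msum n (\<lambda>j. (minv F * G) ^\<^sub>m j * minv F) s *\<^sub>v b"

definition two_stage_iter :: "nat \<Rightarrow> real mat \<Rightarrow> real mat \<Rightarrow> real mat \<Rightarrow> nat \<Rightarrow> real vec \<Rightarrow> real vec \<Rightarrow> nat \<Rightarrow> real vec" where
  "two_stage_iter n F G V s b x0 k =
     ((\<lambda>x. two_stage_T n F G V s *\<^sub>v x + two_stage_c n F G s b) ^^ k) x0"

end

theory Submission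
  imports Defs
begin


lemma minv_props:
  assumes U: "U \<in> carrier_mat n n" and inv: "invertible_mat U"
  shows "minv U \<in> carrier_mat n n" "U * minv U = 1\<^sub>m n" "minv U * U = 1\<^sub>m n"
proof -
  obtain B where B1: "inverts_mat U B" and B2: "inverts_mat B U"
    using inv unfolding invertible_mat_def by blast
  have dU: "dim_row U = n" "dim_col U = n" using U by auto
  have dims: "B \<in> carrier_mat n n" if a: "inverts_mat U B" "inverts_mat B U" for B
  proof -
    have e1: "U * B = 1\<^sub>m n" using a(1) dU unfolding inverts_mat_def by simp
    have e2: "B * U = 1\<^sub>m (dim_row B)" using a(2) unfolding inverts_mat_def by simp
    have "dim_col (U * B) = dim_col (1\<^sub>m n :: real mat)" using e1 by (simp only:)
    hence c1: "dim_col B = n" by (simp only: index_mult_mat index_one_mat)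
    have "dim_col (B * U) = dim_col (1\<^sub>m (dim_row B) :: real mat)" using e2 by (simp only:)
    hence "dim_col U = dim_row B" by (simp only: index_mult_mat index_one_mat)
    hence c2: "dim_row B = n" using dU by linarith
    show "B \<in> carrier_mat n n" using c1 c2 by (intro carrier_matI)
  qed
  have Bc: "B \<in> carrier_mat n n" using dims B1 B2 by blast
  have BU: "U * B = 1\<^sub>m n" "B * U = 1\<^sub>m n" using B1 B2 dU Bc unfolding inverts_mat_def by auto
  have uniq: "B' = B" if "inverts_mat U B'" "inverts_mat B' U" for B'
  proof -
    have B'c: "B' \<in> carrier_mat n n" using dims that by blast
    have B'U: "B' * U = 1\<^sub>m n" using that(2) B'c unfolding inverts_mat_def by auto
    have "B' = B' * (U * B)" using BU B'c by simp
    also have "\<dots> = (B' * U) * B" using B'c U Bc by (simp only: assoc_mult_mat)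
    also have "\<dots> = B" using B'U Bc by simp
    finally show ?thesis .
  qed
  have "minv U = B" unfolding minv_def
  proof (rule the_equality)
    show "inverts_mat U B \<and> inverts_mat B U" using B1 B2 by blast
  next
    fix B' assume "inverts_mat U B' \<and> inverts_mat B' U"
    then show "B' = B" using uniq by blast
  qed
  thus "minv U \<in> carrier_mat n n" "U * minv U = 1\<^sub>m n" "minv U * U = 1\<^sub>m n"
    using Bc BU by auto
qed

lemma cancel_l: fixes A B X :: "real mat" assumes "A \<in> carrier_mat n n" "B \<in> carrier_mat n n" "X \<in> carrier_mat n m"
  "A * B = 1\<^sub>m n" shows "A * (B * X) = X"
proof -
  have "A * (B * X) = (A * B) * X" using assoc_mult_mat[OF assms(1-3)] by simp
  also have "\<dots> = X" using assms(4) left_mult_one_mat[OF assms(3)] by simp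
  finally show ?thesis .
qed

lemma mult_entry: fixes A B :: "real mat" assumes "A \<in> carrier_mat n n" "B \<in> carrier_mat n n" "i < n" "j < n"
  shows "(A * B) $$ (i,j) = (\<Sum>l<n. A $$ (i,l) * B $$ (l,j))"
proof -
  have "(A * B) $$ (i,j) = row A i \<bullet> col B j" using assms by simp
  also have "\<dots> = (\<Sum>l<n. row A i $ l * col B j $ l)" unfolding scalar_prod_def
    using assms by (simp add: atLeast0LessThan)
  also have "\<dots> = (\<Sum>l<n. A $$ (i,l) * B $$ (l,j))" using assms by (intro sum.cong) auto
  finally show ?thesis .
qed

lemma mult_vec_entry: fixes A :: "real mat" assumes "A \<in> carrier_mat n n" "v \<in> carrier_vec n" "i < n"
  shows "(A *\<^sub>v v) $ i = (\<Sum>l<n. A $$ (i,l) * v $ l)"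
proof -
  have "(A *\<^sub>v v) $ i = row A i \<bullet> v" using assms by simp
  also have "\<dots> = (\<Sum>l<n. row A i $ l * v $ l)" unfolding scalar_prod_def
    using assms by (simp add: atLeast0LessThan)
  also have "\<dots> = (\<Sum>l<n. A $$ (i,l) * v $ l)" using assms by (intro sum.cong) auto
  finally show ?thesis .
qed

lemma pow_commute: fixes M :: "real mat" assumes M: "M \<in> carrier_mat n n" shows "M * M ^\<^sub>m k = M ^\<^sub>m k * M"
proof (induct k)
  case 0 then show ?case using M by simp
next
  case (Suc k)
  have Mk: "M ^\<^sub>m k \<in> carrier_mat n n" using M by simp
  have "M * M ^\<^sub>m Suc k = M * (M ^\<^sub>m k * M)" by simp
  also have "\<dots> = (M * M ^\<^sub>m k) * M" using assoc_mult_mat[OF M Mk M] by simp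
  also have "\<dots> = M ^\<^sub>m Suc k * M" using Suc by simp
  finally show ?case .
qed

lemma pow_add: fixes M :: "real mat" assumes M: "M \<in> carrier_mat n n" shows "M ^\<^sub>m (a + b) = M ^\<^sub>m a * M ^\<^sub>m b"
proof (induct b)
  case 0 then show ?case using M by simp
next
  case (Suc b)
  have c: "M ^\<^sub>m a \<in> carrier_mat n n" "M ^\<^sub>m b \<in> carrier_mat n n" using M by auto
  have "M ^\<^sub>m (a + Suc b) = M ^\<^sub>m (a + b) * M" by simp
  also have "\<dots> = (M ^\<^sub>m a * M ^\<^sub>m b) * M" using Suc by simp
  also have "\<dots> = M ^\<^sub>m a * (M ^\<^sub>m b * M)" using assoc_mult_mat[OF c M] .
  finally show ?case by simp
qed

lemma pow_mult: fixes M :: "real mat" assumes M: "M \<in> carrier_mat n n" shows "M ^\<^sub>m (a * b) = (M ^\<^sub>m a) ^\<^sub>m b"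
proof (induct b)
  case 0 then show ?case using M by simp
next
  case (Suc b)
  have "M ^\<^sub>m (a * Suc b) = M ^\<^sub>m (a * b + a)" by (simp add: add.commute)
  also have "\<dots> = M ^\<^sub>m (a * b) * M ^\<^sub>m a" by (rule pow_add[OF M])
  also have "\<dots> = (M ^\<^sub>m a) ^\<^sub>m Suc b" using Suc by simp
  finally show ?case .
qed

lemma msum_carrier: "(\<And>j. f j \<in> carrier_mat n n) \<Longrightarrow> msum n f k \<in> carrier_mat n n"
  by (induct k) auto

lemma msum_entry: "(\<And>j. f j \<in> carrier_mat n n) \<Longrightarrow> i < n \<Longrightarrow> j < n \<Longrightarrow>
   msum n f k $$ (i,j) = (\<Sum>l<k. f l $$ (i,j))"
proof (induct k)
  case (Suc k)
  have "dim_row (f k) = n" "dim_col (f k) = n" using Suc by auto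
  then show ?case using Suc by simp
qed simp

lemma msum_left: assumes "L \<in> carrier_mat n n" "\<And>j. f j \<in> carrier_mat n n"
  shows "msum n (\<lambda>j. L * f j) k = L * msum n f k"
proof (induct k)
  case 0 then show ?case using assms by simp
next
  case (Suc k) then show ?case using assms
    by (simp add: mult_add_distrib_mat[OF assms(1) msum_carrier[OF assms(2)] assms(2)])
qed

lemma msum_right: assumes "L \<in> carrier_mat n n" "\<And>j. f j \<in> carrier_mat n n"
  shows "msum n (\<lambda>j. f j * L) k = msum n f k * L"
proof (induct k)
  case 0 then show ?case using assms by simp
next
  case (Suc k) then show ?case using assms
    by (simp add: add_mult_distrib_mat[OF msum_carrier[OF assms(2)] assms(2) assms(1)])
qed

lemma nonneg_mult: assumes "A \<in> carrier_mat n n" "B \<in> carrier_mat n n" "nonneg_mat A" "nonneg_mat B"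
  shows "nonneg_mat (A * B)"
  unfolding nonneg_mat_def
proof (intro allI impI)
  fix i j assume "i < dim_row (A * B)" "j < dim_col (A * B)"
  hence ij: "i < n" "j < n" using assms by auto
  show "0 \<le> (A * B) $$ (i, j)" unfolding mult_entry[OF assms(1,2) ij]
    using assms ij unfolding nonneg_mat_def by (auto intro!: sum_nonneg)
qed

lemma nonneg_pow: assumes "A \<in> carrier_mat n n" "nonneg_mat A" shows "nonneg_mat (A ^\<^sub>m k)"
proof (induct k)
  case 0 then show ?case using assms unfolding nonneg_mat_def by auto
next
  case (Suc k) then show ?case using assms nonneg_mult[of "A ^\<^sub>m k" n A] by simp
qed

lemma nonneg_msum: assumes "\<And>j. f j \<in> carrier_mat n n" "\<And>j. nonneg_mat (f j)"
  shows "nonneg_mat (msum n f k)"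
  unfolding nonneg_mat_def
proof (intro allI impI)
  fix i j assume "i < dim_row (msum n f k)" "j < dim_col (msum n f k)"
  hence ij: "i < n" "j < n" using msum_carrier[of f n k] assms by auto
  show "0 \<le> msum n f k $$ (i, j)" unfolding msum_entry[OF assms(1) ij]
  proof (rule sum_nonneg)
    fix l have "f l \<in> carrier_mat n n" "nonneg_mat (f l)" using assms by auto
    then show "0 \<le> f l $$ (i, j)" using ij unfolding nonneg_mat_def by auto
  qed
qed

lemma nonneg_add: assumes "A \<in> carrier_mat n n" "B \<in> carrier_mat n n" "nonneg_mat A" "nonneg_mat B"
  shows "nonneg_mat (A + B)"
  unfolding nonneg_mat_def
proof (intro allI impI)
  fix i j assume "i < dim_row (A + B)" "j < dim_col (A + B)"
  hence ij: "i < n" "j < n" using assms by auto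
  have "(A + B) $$ (i,j) = A $$ (i,j) + B $$ (i,j)" using ij assms by simp
  then show "0 \<le> (A + B) $$ (i, j)" using assms ij unfolding nonneg_mat_def by simp
qed



definition conv_mat :: "nat \<Rightarrow> real mat \<Rightarrow> bool" where
  "conv_mat n M \<longleftrightarrow> (\<forall>i<n. \<forall>j<n. (\<lambda>k. (M ^\<^sub>m k) $$ (i,j)) \<longlonglongrightarrow> 0)"

lemma lim_left: fixes C :: "real mat"
  assumes C: "C \<in> carrier_mat n n" and X: "\<And>k. X k \<in> carrier_mat n n"
  and lim: "\<And>i j. i < n \<Longrightarrow> j < n \<Longrightarrow> (\<lambda>k. X k $$ (i,j)) \<longlonglongrightarrow> 0"
  and ij: "i < n" "j < n"
  shows "(\<lambda>k. (C * X k) $$ (i,j)) \<longlonglongrightarrow> 0"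
proof -
  have e: "(C * X k) $$ (i,j) = (\<Sum>l<n. C $$ (i,l) * X k $$ (l,j))" for k
    by (rule mult_entry[OF C X ij])
  show ?thesis unfolding e
    by (intro tendsto_null_sum tendsto_mult_right_zero lim ij, simp)
qed

lemma lim_right: fixes C :: "real mat"
  assumes C: "C \<in> carrier_mat n n" and X: "\<And>k. X k \<in> carrier_mat n n"
  and lim: "\<And>i j. i < n \<Longrightarrow> j < n \<Longrightarrow> (\<lambda>k. X k $$ (i,j)) \<longlonglongrightarrow> 0"
  and ij: "i < n" "j < n"
  shows "(\<lambda>k. (X k * C) $$ (i,j)) \<longlonglongrightarrow> 0"
proof -
  have e: "(X k * C) $$ (i,j) = (\<Sum>l<n. X k $$ (i,l) * C $$ (l,j))" for k
    by (rule mult_entry[OF X C ij])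
  show ?thesis unfolding e
    by (intro tendsto_null_sum tendsto_mult_left_zero lim ij, simp)
qed

lemma lim_vec: fixes v :: "real vec"
  assumes v: "v \<in> carrier_vec n" and X: "\<And>k. X k \<in> carrier_mat n n"
  and lim: "\<And>i j. i < n \<Longrightarrow> j < n \<Longrightarrow> (\<lambda>k. X k $$ (i,j)) \<longlonglongrightarrow> 0"
  and i: "i < n"
  shows "(\<lambda>k. (X k *\<^sub>v v) $ i) \<longlonglongrightarrow> 0"
proof -
  have e: "(X k *\<^sub>v v) $ i = (\<Sum>l<n. X k $$ (i,l) * v $ l)" for k
    by (rule mult_vec_entry[OF X v i])
  show ?thesis unfolding e
    by (intro tendsto_null_sum tendsto_mult_left_zero lim i, simp)
qed

lemma conv_sim: fixes S S' M :: "real mat"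
  assumes S: "S \<in> carrier_mat n n" and S': "S' \<in> carrier_mat n n" and M: "M \<in> carrier_mat n n"
  and i1: "S * S' = 1\<^sub>m n" and i2: "S' * S = 1\<^sub>m n" and c: "conv_mat n M"
  shows "conv_mat n (S * M * S')"
proof -
  have w: "similar_mat_wit (S * M * S') M S S'"
    unfolding similar_mat_wit_def Let_def using S S' M i1 i2 by auto
  have p: "(S * M * S') ^\<^sub>m k = S * (M ^\<^sub>m k) * S'" for k
    by (rule similar_mat_wit_pow_id[OF w])
  show ?thesis unfolding conv_mat_def p
  proof (intro allI impI)
    fix i j assume ij: "i < n" "j < n"
    show "(\<lambda>k. (S * M ^\<^sub>m k * S') $$ (i, j)) \<longlonglongrightarrow> 0"
    proof (rule lim_right[OF S' _ _ ij])
      show "S * M ^\<^sub>m k \<in> carrier_mat n n" for k using S M by simp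
      show "(\<lambda>k. (S * M ^\<^sub>m k) $$ (i, j)) \<longlonglongrightarrow> 0" if "i < n" "j < n" for i j
        by (rule lim_left[OF S _ _ that]) (use M c in \<open>auto simp: conv_mat_def\<close>)
    qed
  qed
qed

lemma conv_pow: fixes M :: "real mat"
  assumes M: "M \<in> carrier_mat n n" and c: "conv_mat n M" and s: "s \<ge> 1"
  shows "conv_mat n (M ^\<^sub>m s)"
  unfolding conv_mat_def
proof (intro allI impI)
  fix i j assume ij: "i < n" "j < n"
  have sm: "strict_mono (\<lambda>k::nat. s * k)" using s by (intro strict_monoI) auto
  have "((\<lambda>k. (M ^\<^sub>m k) $$ (i,j)) \<circ> (\<lambda>k. s * k)) \<longlonglongrightarrow> 0"
    by (rule LIMSEQ_subseq_LIMSEQ[OF _ sm]) (use c ij in \<open>auto simp: conv_mat_def\<close>)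
  then show "(\<lambda>k. ((M ^\<^sub>m s) ^\<^sub>m k) $$ (i, j)) \<longlonglongrightarrow> 0"
    by (simp add: o_def pow_mult[OF M])
qed

lemma neumann_step: fixes X M :: "real mat"
  assumes X: "X \<in> carrier_mat n n" and M: "M \<in> carrier_mat n n"
  and inv: "X * (1\<^sub>m n - M) = 1\<^sub>m n"
  shows "X = 1\<^sub>m n + X * M"
proof -
  have "X * (1\<^sub>m n - M) = X * 1\<^sub>m n - X * M"
    by (rule mult_minus_distrib_mat[OF X one_carrier_mat M])
  hence e: "X - X * M = 1\<^sub>m n" using inv X by simp
  show ?thesis
  proof (rule eq_matI)
    fix i j assume ij: "i < dim_row (1\<^sub>m n + X * M)" "j < dim_col (1\<^sub>m n + X * M)"
    hence ij': "i < n" "j < n" using X M by auto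
    have "(X - X * M) $$ (i,j) = 1\<^sub>m n $$ (i,j)" using e by simp
    then show "X $$ (i, j) = (1\<^sub>m n + X * M) $$ (i, j)" using ij' X M by simp
  qed (use X M in auto)
qed

lemma neumann: fixes X M :: "real mat"
  assumes X: "X \<in> carrier_mat n n" and M: "M \<in> carrier_mat n n"
  and inv: "X * (1\<^sub>m n - M) = 1\<^sub>m n"
  shows "X = msum n (\<lambda>k. M ^\<^sub>m k) m + X * M ^\<^sub>m m"
proof (induct m)
  case 0 then show ?case using X M by simp
next
  case (Suc m)
  have Mm: "M ^\<^sub>m m \<in> carrier_mat n n" using M by simp
  have S: "msum n (\<lambda>k. M ^\<^sub>m k) m \<in> carrier_mat n n" by (rule msum_carrier) (use M in simp)
  have "X * M ^\<^sub>m m = (1\<^sub>m n + X * M) * M ^\<^sub>m m" using neumann_step[OF X M inv] by simp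
  also have "\<dots> = M ^\<^sub>m m + (X * M) * M ^\<^sub>m m"
    using add_mult_distrib_mat[OF one_carrier_mat mult_carrier_mat[OF X M] Mm] left_mult_one_mat[OF Mm]
    by (simp only:)
  also have "(X * M) * M ^\<^sub>m m = X * (M * M ^\<^sub>m m)" using assoc_mult_mat[OF X M Mm] .
  also have "M * M ^\<^sub>m m = M ^\<^sub>m Suc m" using pow_commute[OF M] by simp
  finally have e: "X * M ^\<^sub>m m = M ^\<^sub>m m + X * M ^\<^sub>m Suc m" .
  have "X = msum n (\<lambda>k. M ^\<^sub>m k) m + (M ^\<^sub>m m + X * M ^\<^sub>m Suc m)" using Suc e by simp
  also have "\<dots> = msum n (\<lambda>k. M ^\<^sub>m k) (Suc m) + X * M ^\<^sub>m Suc m"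
    using assoc_add_mat[OF S Mm mult_carrier_mat[OF X pow_carrier_mat[OF M, of "Suc m"]]] by simp
  finally show ?case .
qed

lemma neumann_entry: fixes X M :: "real mat"
  assumes X: "X \<in> carrier_mat n n" and M: "M \<in> carrier_mat n n"
  and inv: "X * (1\<^sub>m n - M) = 1\<^sub>m n" and ij: "i < n" "j < n"
  shows "X $$ (i,j) = (\<Sum>k<m. (M ^\<^sub>m k) $$ (i,j)) + (X * M ^\<^sub>m m) $$ (i,j)"
proof -
  have S: "msum n (\<lambda>k. M ^\<^sub>m k) m \<in> carrier_mat n n" by (rule msum_carrier) (use M in simp)
  have "X $$ (i,j) = (msum n (\<lambda>k. M ^\<^sub>m k) m + X * M ^\<^sub>m m) $$ (i,j)"
    using neumann[OF X M inv, of m] by simp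
  also have "\<dots> = msum n (\<lambda>k. M ^\<^sub>m k) m $$ (i,j) + (X * M ^\<^sub>m m) $$ (i,j)"
    using S X M ij by simp
  also have "msum n (\<lambda>k. M ^\<^sub>m k) m $$ (i,j) = (\<Sum>k<m. (M ^\<^sub>m k) $$ (i,j))"
    by (rule msum_entry) (use M ij in auto)
  finally show ?thesis .
qed

lemma nonneg_inv: fixes X M :: "real mat"
  assumes X: "X \<in> carrier_mat n n" and M: "M \<in> carrier_mat n n"
  and inv: "X * (1\<^sub>m n - M) = 1\<^sub>m n" and nM: "nonneg_mat M" and c: "conv_mat n M"
  shows "nonneg_mat X"
  unfolding nonneg_mat_def
proof (intro allI impI)
  fix i j assume "i < dim_row X" "j < dim_col X"
  hence ij: "i < n" "j < n" using X by auto
  have lim: "(\<lambda>m. (X * M ^\<^sub>m m) $$ (i,j)) \<longlonglongrightarrow> 0"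
    by (rule lim_left[OF X _ _ ij]) (use M c in \<open>auto simp: conv_mat_def\<close>)
  have "(X * M ^\<^sub>m m) $$ (i,j) \<le> X $$ (i,j)" for m
  proof -
    have "0 \<le> (\<Sum>k<m. (M ^\<^sub>m k) $$ (i,j))"
      using nonneg_pow[OF M nM] M ij unfolding nonneg_mat_def by (intro sum_nonneg) auto
    then show ?thesis using neumann_entry[OF X M inv ij, of m] by linarith
  qed
  then show "0 \<le> X $$ (i, j)" using LIMSEQ_le_const2[OF lim] by blast
qed

lemma conv_from_inv: fixes N M :: "real mat"
  assumes N: "N \<in> carrier_mat n n" and M: "M \<in> carrier_mat n n"
  and inv: "N * (1\<^sub>m n - M) = 1\<^sub>m n" and nM: "nonneg_mat M" and nN: "nonneg_mat N"
  shows "conv_mat n M"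
  unfolding conv_mat_def
proof (intro allI impI)
  fix i j assume ij: "i < n" "j < n"
  have pos: "0 \<le> (M ^\<^sub>m k) $$ (i,j)" for k
    using nonneg_pow[OF M nM] M ij unfolding nonneg_mat_def by auto
  have bd: "(\<Sum>k<m. (M ^\<^sub>m k) $$ (i,j)) \<le> N $$ (i,j)" for m
  proof -
    have "nonneg_mat (N * M ^\<^sub>m m)" by (rule nonneg_mult[OF N _ nN nonneg_pow[OF M nM]]) (use M in simp)
    hence "0 \<le> (N * M ^\<^sub>m m) $$ (i,j)" using N M ij unfolding nonneg_mat_def by auto
    then show ?thesis using neumann_entry[OF N M inv ij, of m] by linarith
  qed
  have "summable (\<lambda>k. (M ^\<^sub>m k) $$ (i,j))"
    by (rule summableI_nonneg_bounded[OF pos bd])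
  then show "(\<lambda>k. (M ^\<^sub>m k) $$ (i,j)) \<longlonglongrightarrow> 0" by (rule summable_LIMSEQ_zero)
qed



declare minus_carrier_mat[simp]

lemma pow_fix: fixes M :: "real mat"
  assumes M: "M \<in> carrier_mat n n" and v: "v \<in> carrier_vec n" and Mv: "M *\<^sub>v v = v"
  shows "M ^\<^sub>m k *\<^sub>v v = v"
proof (induct k)
  case 0 then show ?case using v M by simp
next
  case (Suc k)
  have "M ^\<^sub>m Suc k *\<^sub>v v = (M ^\<^sub>m k * M) *\<^sub>v v" by simp
  also have "\<dots> = M ^\<^sub>m k *\<^sub>v (M *\<^sub>v v)" by (rule assoc_mult_mat_vec[OF pow_carrier_mat[OF M] M v])
  finally show ?case using Mv Suc by simp
qed

lemma inv_exists: fixes M :: "real mat"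
  assumes M: "M \<in> carrier_mat n n" and c: "conv_mat n M"
  shows "\<exists>X. X \<in> carrier_mat n n \<and> X * (1\<^sub>m n - M) = 1\<^sub>m n"
proof -
  have IM: "1\<^sub>m n - M \<in> carrier_mat n n" using M by simp
  have "det (1\<^sub>m n - M) \<noteq> 0"
  proof
    assume "det (1\<^sub>m n - M) = 0"
    then obtain v where v: "v \<in> carrier_vec n" "v \<noteq> 0\<^sub>v n" "(1\<^sub>m n - M) *\<^sub>v v = 0\<^sub>v n"
      using det_0_iff_vec_prod_zero[OF IM] by blast
    have "(1\<^sub>m n - M) *\<^sub>v v = 1\<^sub>m n *\<^sub>v v - M *\<^sub>v v"
      by (rule minus_mult_distrib_mat_vec[OF one_carrier_mat M v(1)])
    hence e: "v - M *\<^sub>v v = 0\<^sub>v n" using v by simp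
    have Mv: "M *\<^sub>v v = v"
    proof (rule eq_vecI)
      fix i assume "i < dim_vec v"
      hence i: "i < n" using v by simp
      have "(v - M *\<^sub>v v) $ i = 0\<^sub>v n $ i" using e by simp
      then show "(M *\<^sub>v v) $ i = v $ i" using i v M by simp
    qed (use M v in simp)
    have "v = 0\<^sub>v n"
    proof (rule eq_vecI)
      fix i assume "i < dim_vec (0\<^sub>v n :: real vec)"
      hence i: "i < n" by simp
      have "(\<lambda>k. (M ^\<^sub>m k *\<^sub>v v) $ i) \<longlonglongrightarrow> 0"
        by (rule lim_vec[OF v(1) _ _ i]) (use M c in \<open>auto simp: conv_mat_def\<close>)
      hence "(\<lambda>k. v $ i) \<longlonglongrightarrow> 0" using pow_fix[OF M v(1) Mv] by simp
      hence "v $ i = 0" by (simp add: LIMSEQ_const_iff)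
      then show "v $ i = 0\<^sub>v n $ i" using i by simp
    qed (use v in simp)
    with v(2) show False by simp
  qed
  from det_non_zero_imp_unit[OF IM this, of undefined]
  show ?thesis unfolding Units_def ring_mat_def by auto
qed



lemma smult_pow: fixes A :: "complex mat"
  assumes A: "A \<in> carrier_mat n n"
  shows "(a \<cdot>\<^sub>m A) ^\<^sub>m k = (a ^ k) \<cdot>\<^sub>m (A ^\<^sub>m k)"
proof (induct k)
  case 0 then show ?case using A by (intro eq_matI) auto
next
  case (Suc k)
  have Ak: "A ^\<^sub>m k \<in> carrier_mat n n" using A by simp
  have "(a \<cdot>\<^sub>m A) ^\<^sub>m Suc k = (a ^ k \<cdot>\<^sub>m A ^\<^sub>m k) * (a \<cdot>\<^sub>m A)" using Suc by simp
  also have "\<dots> = a \<cdot>\<^sub>m ((a ^ k \<cdot>\<^sub>m A ^\<^sub>m k) * A)"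
    by (rule mult_smult_distrib[OF smult_carrier_mat[OF Ak] A])
  also have "(a ^ k \<cdot>\<^sub>m A ^\<^sub>m k) * A = a ^ k \<cdot>\<^sub>m (A ^\<^sub>m k * A)"
    by (rule mult_smult_assoc_mat[OF Ak A])
  also have "a \<cdot>\<^sub>m (a ^ k \<cdot>\<^sub>m (A ^\<^sub>m k * A)) = (a ^ Suc k) \<cdot>\<^sub>m (A ^\<^sub>m Suc k)"
    using A Ak by (intro eq_matI) auto
  finally show ?case .
qed

lemma smult_mult_vec: fixes A :: "complex mat"
  assumes A: "A \<in> carrier_mat n n" and v: "v \<in> carrier_vec n"
  shows "(c \<cdot>\<^sub>m A) *\<^sub>v v = c \<cdot>\<^sub>v (A *\<^sub>v v)"
  using A v by (intro eq_vecI) auto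

lemma rho_conv: fixes M :: "real mat"
  assumes M: "M \<in> carrier_mat n n" and r1: "rho M < 1"
  shows "conv_mat n M"
proof (cases "n = 0")
  case True then show ?thesis unfolding conv_mat_def by simp
next
  case False
  hence n: "n > 0" by simp
  define Mc where "Mc = map_mat complex_of_real M"
  have Mc: "Mc \<in> carrier_mat n n" unfolding Mc_def using M by simp
  define \<rho> where "\<rho> = spectral_radius Mc"
  have rho1: "\<rho> < 1" using r1 unfolding \<rho>_def Mc_def rho_def .
  have rho0: "0 \<le> \<rho>" using spectral_radius_mem_max(1)[OF Mc n] unfolding \<rho>_def by auto
  define r where "r = (1 + \<rho>) / 2"
  have r: "0 < r" "r < 1" "\<rho> < r" using rho0 rho1 unfolding r_def by auto
  define N where "N = complex_of_real (1 / r) \<cdot>\<^sub>m Mc"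
  have N: "N \<in> carrier_mat n n" unfolding N_def using Mc by simp
  have McN: "Mc = complex_of_real r \<cdot>\<^sub>m N"
    unfolding N_def using Mc r by (intro eq_matI) (auto simp: field_simps)
  have srN: "spectral_radius N < 1"
  proof -
    obtain \<mu> where mu: "\<mu> \<in> spectrum N" and eq: "spectral_radius N = norm \<mu>"
      using spectral_radius_mem_max(1)[OF N n] by auto
    from mu obtain v where ev: "eigenvector N v \<mu>"
      unfolding spectrum_def eigenvalue_def by auto
    hence v: "v \<in> carrier_vec n" "v \<noteq> 0\<^sub>v n" "N *\<^sub>v v = \<mu> \<cdot>\<^sub>v v"
      unfolding eigenvector_def using N by auto
    have "Mc *\<^sub>v v = complex_of_real r \<cdot>\<^sub>v (\<mu> \<cdot>\<^sub>v v)"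
      unfolding McN smult_mult_vec[OF N v(1)] v(3) ..
    also have "\<dots> = (complex_of_real r * \<mu>) \<cdot>\<^sub>v v" using v by (intro eq_vecI) auto
    finally have "eigenvector Mc v (complex_of_real r * \<mu>)"
      unfolding eigenvector_def using v Mc by auto
    hence "norm (complex_of_real r * \<mu>) \<in> norm ` spectrum Mc"
      unfolding spectrum_def eigenvalue_def by auto
    from spectral_radius_mem_max(2)[OF Mc n this]
    have "r * norm \<mu> \<le> \<rho>" unfolding \<rho>_def using r by (simp add: norm_mult)
    hence "r * norm \<mu> < r * 1" using r by linarith
    hence "norm \<mu> < 1" using r(1) by (metis mult_less_cancel_left_pos)
    then show ?thesis using eq by simp
  qed
  obtain c where c: "\<And>k. norm_bound (N ^\<^sub>m k) c"
    using spectral_radius_jnf_norm_bound_less_1_upper_triangular[OF N srN] by auto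
  show ?thesis unfolding conv_mat_def
  proof (intro allI impI)
    fix i j assume ij: "i < n" "j < n"
    have bd: "norm ((M ^\<^sub>m k) $$ (i,j)) \<le> norm (r ^ k) * c" for k
    proof -
      have "norm ((N ^\<^sub>m k) $$ (i,j)) \<le> c" using c[of k] ij N unfolding norm_bound_def by auto
      moreover have "N ^\<^sub>m k = complex_of_real (1 / r) ^ k \<cdot>\<^sub>m Mc ^\<^sub>m k"
        unfolding N_def by (rule smult_pow[OF Mc])
      moreover have "Mc ^\<^sub>m k = map_mat complex_of_real (M ^\<^sub>m k)"
        unfolding Mc_def by (rule of_real_hom.mat_hom_pow[OF M, symmetric])
      ultimately have "norm (complex_of_real (1 / r) ^ k * complex_of_real ((M ^\<^sub>m k) $$ (i,j))) \<le> c"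
        using ij M by simp
      hence "(1 / r) ^ k * norm ((M ^\<^sub>m k) $$ (i,j)) \<le> c"
        using r by (simp add: norm_mult norm_power norm_divide)
      hence "norm ((M ^\<^sub>m k) $$ (i,j)) \<le> c * r ^ k"
        using r by (simp add: field_simps)
      then show ?thesis using r by (simp add: mult.commute)
    qed
    have "(\<lambda>k. r ^ k) \<longlonglongrightarrow> 0" using r by (intro LIMSEQ_power_zero) auto
    then show "(\<lambda>k. (M ^\<^sub>m k) $$ (i, j)) \<longlonglongrightarrow> 0"
      by (rule tendsto_0_le[where K = c]) (use bd in \<open>auto intro: always_eventually\<close>)
  qed
qed

lemma conv_rho: fixes M :: "real mat"
  assumes M: "M \<in> carrier_mat n n" and n: "n > 0" and cv: "conv_mat n M"
  shows "rho M < 1"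
proof -
  define Mc where "Mc = map_mat complex_of_real M"
  have Mc: "Mc \<in> carrier_mat n n" unfolding Mc_def using M by simp
  obtain \<mu> where mu: "\<mu> \<in> spectrum Mc" and eq: "spectral_radius Mc = norm \<mu>"
    using spectral_radius_mem_max(1)[OF Mc n] by auto
  from mu obtain v where ev: "eigenvector Mc v \<mu>"
    unfolding spectrum_def eigenvalue_def by auto
  hence v: "v \<in> carrier_vec n" "v \<noteq> 0\<^sub>v n"
    unfolding eigenvector_def using Mc by auto
  have pw: "Mc ^\<^sub>m k *\<^sub>v v = \<mu> ^ k \<cdot>\<^sub>v v" for k by (rule eigenvector_pow[OF Mc ev])
  obtain i where i: "i < n" "v $ i \<noteq> 0"
  proof (rule ccontr)
    assume "\<not> thesis"
    hence "\<forall>i<n. v $ i = 0" using that by blast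
    hence "v = 0\<^sub>v n" using v by (intro eq_vecI) auto
    with v(2) show False by simp
  qed
  have ent: "(Mc ^\<^sub>m k *\<^sub>v v) $ i = (\<Sum>l<n. complex_of_real ((M ^\<^sub>m k) $$ (i,l)) * v $ l)" for k
  proof -
    have "Mc ^\<^sub>m k = map_mat complex_of_real (M ^\<^sub>m k)"
      unfolding Mc_def by (rule of_real_hom.mat_hom_pow[OF M, symmetric])
    then show ?thesis using M v i
      by (auto simp: scalar_prod_def atLeast0LessThan intro!: sum.cong)
  qed
  have "(\<lambda>k. (Mc ^\<^sub>m k *\<^sub>v v) $ i) \<longlonglongrightarrow> 0"
    unfolding ent
    by (intro tendsto_null_sum tendsto_mult_left_zero)
       (use cv i in \<open>auto simp: conv_mat_def intro: tendsto_of_real[where a = 0, simplified]\<close>)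
  hence "(\<lambda>k. \<mu> ^ k * v $ i) \<longlonglongrightarrow> 0" unfolding pw using v i by simp
  hence "(\<lambda>k. \<mu> ^ k * v $ i / v $ i) \<longlonglongrightarrow> 0" by (rule tendsto_divide_zero)
  hence "(\<lambda>k. \<mu> ^ k) \<longlonglongrightarrow> 0" using i by simp
  hence "(\<lambda>k. norm (\<mu> ^ k)) \<longlonglongrightarrow> 0" by (rule tendsto_norm_zero)
  hence "eventually (\<lambda>k. norm (\<mu> ^ k) < 1) sequentially" by (rule order_tendstoD) simp
  then obtain k where "norm (\<mu> ^ k) < 1" by (auto simp: eventually_sequentially)
  hence "norm \<mu> < 1"
    by (metis norm_power one_le_power not_less norm_ge_zero)
  then show ?thesis unfolding rho_def using eq Mc_def by simp
qed



lemma geo_sum: fixes M :: "real mat"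
  assumes M: "M \<in> carrier_mat n n"
  shows "msum n (\<lambda>j. M ^\<^sub>m j) k * (1\<^sub>m n - M) = 1\<^sub>m n - M ^\<^sub>m k"
proof (induct k)
  case 0 then show ?case using M by (simp, intro eq_matI, auto)
next
  case (Suc k)
  have S: "msum n (\<lambda>j. M ^\<^sub>m j) k \<in> carrier_mat n n" by (rule msum_carrier) (use M in simp)
  have Mk: "M ^\<^sub>m k \<in> carrier_mat n n" using M by simp
  have IM: "1\<^sub>m n - M \<in> carrier_mat n n" using M by simp
  have "msum n (\<lambda>j. M ^\<^sub>m j) (Suc k) * (1\<^sub>m n - M)
      = msum n (\<lambda>j. M ^\<^sub>m j) k * (1\<^sub>m n - M) + M ^\<^sub>m k * (1\<^sub>m n - M)"
    using add_mult_distrib_mat[OF S Mk IM] by simp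
  also have "M ^\<^sub>m k * (1\<^sub>m n - M) = M ^\<^sub>m k * 1\<^sub>m n - M ^\<^sub>m k * M"
    by (rule mult_minus_distrib_mat[OF Mk one_carrier_mat M])
  also have "M ^\<^sub>m k * 1\<^sub>m n = M ^\<^sub>m k" by (rule right_mult_one_mat[OF Mk])
  also have "M ^\<^sub>m k * M = M ^\<^sub>m Suc k" by simp
  finally have e: "msum n (\<lambda>j. M ^\<^sub>m j) (Suc k) * (1\<^sub>m n - M)
      = (1\<^sub>m n - M ^\<^sub>m k) + (M ^\<^sub>m k - M ^\<^sub>m Suc k)" using Suc by simp
  show ?case unfolding e
    by (rule eq_matI) (use M in auto)
qed

lemma conj_msum: fixes L L' :: "real mat"
  assumes L: "L \<in> carrier_mat n n" and L': "L' \<in> carrier_mat n n" and f: "\<And>j. f j \<in> carrier_mat n n"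
  shows "msum n (\<lambda>j. L * f j * L') k = L * msum n f k * L'"
proof -
  have "msum n (\<lambda>j. L * f j * L') k = msum n (\<lambda>j. L * f j) k * L'"
    by (rule msum_right[OF L']) (use L f in auto)
  also have "msum n (\<lambda>j. L * f j) k = L * msum n f k" by (rule msum_left[OF L f])
  finally show ?thesis .
qed

lemma cancel_l': fixes A B X :: "real mat" assumes "A \<in> carrier_mat n n" "B \<in> carrier_mat n n" "X \<in> carrier_mat n n"
  "A * B = 1\<^sub>m n" shows "A * (B * X) = X"
  by (rule cancel_l[OF assms])



theorem corollary3p4:
  fixes n :: nat and A U V F G :: "real mat"
  assumes "A \<in> carrier_mat n n" and "invertible_mat A"
    and "regular_splitting n A U V" and "convergent_splitting U V"
    and "weak_regular_splitting_II n U F G" and "convergent_splitting F G"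
    and "V * minv F * G = G * minv F * V"
  shows "\<forall>s::nat. s \<ge> 1 \<longrightarrow>
           rho (two_stage_T n F G V s) < 1 \<and>
           (\<forall>b x0. b \<in> carrier_vec n \<longrightarrow> x0 \<in> carrier_vec n \<longrightarrow>
              (\<forall>i<n. (\<lambda>k. two_stage_iter n F G V s b x0 k $ i) \<longlonglongrightarrow> (minv A *\<^sub>v b) $ i))"
proof (intro allI impI)
  fix s :: nat assume s: "s \<ge> 1"
  have AC: "A \<in> carrier_mat n n" and UC: "U \<in> carrier_mat n n" and VC: "V \<in> carrier_mat n n"
    and AUV: "A = U - V" and invU: "invertible_mat U" and nUi: "nonneg_mat (minv U)"
    and nV: "nonneg_mat V"
    using assms(3) unfolding regular_splitting_def by auto
  have FC: "F \<in> carrier_mat n n" and GC: "G \<in> carrier_mat n n"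
    and UFG: "U = F - G" and invF: "invertible_mat F" and nFi: "nonneg_mat (minv F)"
    and nR: "nonneg_mat (G * minv F)"
    using assms(5) unfolding weak_regular_splitting_II_def by auto
  define Fi where "Fi = minv F"
  define Ui where "Ui = minv U"
  define Ai where "Ai = minv A"
  note FiP = minv_props[OF FC invF, folded Fi_def]
  note UiP = minv_props[OF UC invU, folded Ui_def]
  note AiP = minv_props[OF AC assms(2), folded Ai_def]
  have FiC: "Fi \<in> carrier_mat n n" and FFi: "F * Fi = 1\<^sub>m n" and FiF: "Fi * F = 1\<^sub>m n"
    using FiP by auto
  have UiC: "Ui \<in> carrier_mat n n" and UUi: "U * Ui = 1\<^sub>m n" and UiU: "Ui * U = 1\<^sub>m n"
    using UiP by auto
  have AiC: "Ai \<in> carrier_mat n n" and AAi: "A * Ai = 1\<^sub>m n" and AiA: "Ai * A = 1\<^sub>m n"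
    using AiP by auto
  note mc = mult_carrier_mat[of _ n n _ n]
  note cs = FC GC UC VC AC FiC UiC AiC mc
  note asc = assoc_mult_mat[of _ n n _ n _ n]
  define I where "I = (1\<^sub>m n :: real mat)"
  have IC: "I \<in> carrier_mat n n" unfolding I_def by simp
  define P where "P = Fi * G"
  define R where "R = G * Fi"
  define W where "W = V * Fi"
  define K where "K = F * Ui"
  define B where "B = K * W"
  define T where "T = two_stage_T n F G V s"
  have PC: "P \<in> carrier_mat n n" unfolding P_def by (simp add: cs asc)
  have RC: "R \<in> carrier_mat n n" unfolding R_def by (simp add: cs asc)
  have WC: "W \<in> carrier_mat n n" unfolding W_def by (simp add: cs asc)
  have KC: "K \<in> carrier_mat n n" unfolding K_def by (simp add: cs asc)
  have BC: "B \<in> carrier_mat n n" unfolding B_def using KC WC by simp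
  note cs2 = PC RC WC KC BC IC
  have cP: "conv_mat n P" unfolding P_def Fi_def
    by (rule rho_conv) (use assms(6) cs in \<open>auto simp: convergent_splitting_def P_def Fi_def\<close>)
  have R_eq: "R = F * P * Fi"
  proof -
    have "F * P * Fi = F * (Fi * (G * Fi))" unfolding P_def by (simp add: cs asc)
    also have "\<dots> = G * Fi" by (rule cancel_l'[OF FC FiC _ FFi]) (simp add: cs)
    finally show ?thesis unfolding R_def by simp
  qed
  have cR: "conv_mat n R" unfolding R_eq by (rule conv_sim[OF FC FiC PC FFi FiF cP])
  have "rho (Ui * V) < 1" using assms(4) unfolding convergent_splitting_def Ui_def .
  hence cUV: "conv_mat n (Ui * V)" by (intro rho_conv) (use cs in auto)
  have B_eq: "B = F * (Ui * V) * Fi" unfolding B_def K_def W_def by (simp add: cs asc)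
  have cB: "conv_mat n B" unfolding B_eq
    by (rule conv_sim[OF FC FiC _ FFi FiF cUV]) (simp add: cs)
  have nR': "nonneg_mat R" using nR unfolding R_def Fi_def .
  have nW: "nonneg_mat W" unfolding W_def by (rule nonneg_mult[OF VC FiC nV nFi[folded Fi_def]])
  have IR: "I - R = U * Fi"
  proof -
    have "U * Fi = F * Fi - G * Fi" unfolding UFG by (rule minus_mult_distrib_mat[OF FC GC FiC])
    then show ?thesis unfolding I_def R_def FFi by simp
  qed
  have KIR: "K * (I - R) = I"
  proof -
    have "K * (I - R) = F * (Ui * (U * Fi))" unfolding IR K_def by (simp add: cs asc)
    also have "Ui * (U * Fi) = Fi" by (rule cancel_l'[OF UiC UC FiC UiU])
    finally show ?thesis using FFi unfolding I_def by simp
  qed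
  have IRK: "(I - R) * K = I"
  proof -
    have "(I - R) * K = U * (Fi * (F * Ui))" unfolding IR K_def by (simp add: cs asc)
    also have "Fi * (F * Ui) = Ui" by (rule cancel_l'[OF FiC FC UiC FiF])
    finally show ?thesis using UUi unfolding I_def by simp
  qed
  have nK: "nonneg_mat K" by (rule nonneg_inv[OF KC RC KIR[unfolded I_def] nR' cR])
  have nB: "nonneg_mat B" unfolding B_def by (rule nonneg_mult[OF KC WC nK nW])
  define X2 where "X2 = F * Ai * U * Fi"
  have X2C: "X2 \<in> carrier_mat n n" unfolding X2_def by (simp add: cs asc)
  have IB: "I - B = F * (Ui * (A * Fi))"
  proof -
    have "Ui * A = Ui * U - Ui * V" unfolding AUV by (rule mult_minus_distrib_mat[OF UiC UC VC])
    hence e1: "Ui * A = I - Ui * V" using UiU unfolding I_def by simp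
    have "F * (Ui * (A * Fi)) = F * ((Ui * A) * Fi)" by (simp add: cs asc)
    also have "(Ui * A) * Fi = I * Fi - (Ui * V) * Fi" unfolding e1
      by (rule minus_mult_distrib_mat[OF IC _ FiC]) (simp add: cs)
    also have "F * (I * Fi - (Ui * V) * Fi) = F * (I * Fi) - F * ((Ui * V) * Fi)"
      by (rule mult_minus_distrib_mat[OF FC, of _ n]) (simp_all add: cs IC)
    also have "F * (I * Fi) = I" using FFi FiC unfolding I_def by simp
    also have "F * ((Ui * V) * Fi) = B" unfolding B_eq by (simp add: cs asc)
    finally show ?thesis by simp
  qed
  have X2IB: "X2 * (I - B) = I"
  proof -
    have "X2 * (I - B) = F * (Ai * (U * (Fi * (F * (Ui * (A * Fi))))))"
      unfolding IB X2_def by (simp add: cs asc)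
    also have "\<dots> = I" using cs FFi FiF UUi AiA unfolding I_def by (simp add: cancel_l' asc)
    finally show ?thesis .
  qed
  have nX2: "nonneg_mat X2" by (rule nonneg_inv[OF X2C BC X2IB[unfolded I_def] nB cB])
  define Rs where "Rs = R ^\<^sub>m s"
  have RsC: "Rs \<in> carrier_mat n n" unfolding Rs_def using RC by simp
  have cRs: "conv_mat n Rs" unfolding Rs_def by (rule conv_pow[OF RC cR s])
  have nRs: "nonneg_mat Rs" unfolding Rs_def by (rule nonneg_pow[OF RC nR'])
  obtain X1 where X1C: "X1 \<in> carrier_mat n n" and X1I: "X1 * (1\<^sub>m n - Rs) = 1\<^sub>m n"
    using inv_exists[OF RsC cRs] by blast
  have nX1: "nonneg_mat X1" by (rule nonneg_inv[OF X1C RsC X1I nRs cRs])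
  have RP: "R ^\<^sub>m j = F * P ^\<^sub>m j * Fi" for j
  proof -
    have w: "similar_mat_wit R P F Fi"
      unfolding similar_mat_wit_def Let_def using RC PC FC FiC FFi FiF R_eq by auto
    show ?thesis by (rule similar_mat_wit_pow_id[OF w])
  qed
  define S where "S = msum n (\<lambda>j. R ^\<^sub>m j) s"
  have SC: "S \<in> carrier_mat n n" unfolding S_def by (rule msum_carrier) (use RC in simp)
  have T_def': "T = P ^\<^sub>m s + msum n (\<lambda>j. P ^\<^sub>m j * Fi * V) s"
    unfolding T_def two_stage_T_def P_def Fi_def ..
  have msC: "msum n (\<lambda>j. P ^\<^sub>m j * Fi * V) s \<in> carrier_mat n n"
    by (rule msum_carrier) (simp add: cs PC)
  have TC: "T \<in> carrier_mat n n" unfolding T_def' using PC msC by simp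
  define T' where "T' = F * T * Fi"
  have T'C: "T' \<in> carrier_mat n n" unfolding T'_def by (simp add: cs TC)
  have T'_eq: "T' = Rs + S * W"
  proof -
    have "T' = F * P ^\<^sub>m s * Fi + F * msum n (\<lambda>j. P ^\<^sub>m j * Fi * V) s * Fi"
      unfolding T'_def T_def'
      using add_mult_distrib_mat[OF mult_carrier_mat[OF FC pow_carrier_mat[OF PC]] mult_carrier_mat[OF FC msC] FiC]
        mult_add_distrib_mat[OF FC pow_carrier_mat[OF PC] msC]
      by simp
    also have "F * P ^\<^sub>m s * Fi = Rs" unfolding Rs_def RP ..
    also have "F * msum n (\<lambda>j. P ^\<^sub>m j * Fi * V) s * Fi = msum n (\<lambda>j. F * (P ^\<^sub>m j * Fi * V) * Fi) s"
      by (rule conj_msum[symmetric, OF FC FiC]) (simp add: cs PC)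
    also have "\<dots> = msum n (\<lambda>j. R ^\<^sub>m j * W) s"
    proof -
      have "F * (P ^\<^sub>m j * Fi * V) * Fi = R ^\<^sub>m j * W" for j
        unfolding RP W_def by (simp add: cs asc PC)
      then show ?thesis by simp
    qed
    also have "\<dots> = S * W" unfolding S_def by (rule msum_right[OF WC]) (simp add: RC)
    finally show ?thesis .
  qed
  have S_eq: "S = (I - Rs) * K"
  proof -
    have g: "S * (I - R) = I - Rs" unfolding S_def I_def Rs_def by (rule geo_sum[OF RC])
    have "S = S * ((I - R) * K)" unfolding IRK using SC unfolding I_def by simp
    also have "\<dots> = (S * (I - R)) * K" by (rule assoc_mult_mat[symmetric, OF SC _ KC]) (simp add: RC IC)
    finally show ?thesis unfolding g .
  qed
  have T'_eq2: "T' = Rs + (I - Rs) * B"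
    unfolding T'_eq S_eq B_def by (simp add: asc cs KC WC RsC IC)
  have IT': "I - T' = (I - Rs) * (I - B)"
  proof -
    have "(I - Rs) * (I - B) = (I - Rs) * I - (I - Rs) * B"
      by (rule mult_minus_distrib_mat[OF _ IC BC, of _ n]) (simp add: IC RsC)
    also have "(I - Rs) * I = I - Rs" unfolding I_def by (rule right_mult_one_mat[of _ n]) (simp add: RsC)
    finally have e: "(I - Rs) * (I - B) = I - Rs - (I - Rs) * B" .
    have IRsB: "(I - Rs) * B \<in> carrier_mat n n" by (simp add: cs IC RsC BC)
    show ?thesis unfolding e T'_eq2
      by (rule eq_matI) (use IRsB RsC IC in auto)
  qed
  define N where "N = X2 * X1"
  have NC: "N \<in> carrier_mat n n" unfolding N_def by (simp add: cs X2C X1C)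
  have nN: "nonneg_mat N" unfolding N_def by (rule nonneg_mult[OF X2C X1C nX2 nX1])
  have NIT: "N * (I - T') = I"
  proof -
    have "N * (I - T') = X2 * ((X1 * (I - Rs)) * (I - B))"
      unfolding IT' N_def by (simp add: asc cs X2C X1C IC RsC BC)
    also have "X1 * (I - Rs) = I" using X1I unfolding I_def .
    also have "I * (I - B) = I - B" unfolding I_def by (rule left_mult_one_mat[of _ n n]) (simp add: BC)
    finally show ?thesis using X2IB by simp
  qed
  have nS: "nonneg_mat S" unfolding S_def
    by (rule nonneg_msum) (simp_all add: nonneg_pow[OF RC nR'] RC)
  have SWC: "S * W \<in> carrier_mat n n" using SC WC by simp
  have nT': "nonneg_mat T'" unfolding T'_eq
    by (rule nonneg_add[OF RsC SWC nRs nonneg_mult[OF SC WC nS nW]])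
  have cT': "conv_mat n T'" by (rule conv_from_inv[OF NC T'C NIT[unfolded I_def] nT' nN])
  have T_eq: "T = Fi * T' * F"
  proof -
    have "Fi * T' * F = Fi * (F * (T * (Fi * F)))" by (simp add: asc cs TC T'_def)
    also have "\<dots> = T" using FiF right_mult_one_mat[OF TC] cancel_l'[OF FiC FC TC FiF] by simp
    finally show ?thesis by simp
  qed
  have cT: "conv_mat n T" unfolding T_eq by (rule conv_sim[OF FiC FC T'C FiF FFi cT'])
  have rhoT: "rho T < 1"
  proof (cases "n = 0")
    case True
    have "T = Ui * V" using TC UiC VC True by (intro eq_matI) auto
    then show ?thesis using assms(4) unfolding convergent_splitting_def Ui_def by simp
  next
    case False then show ?thesis using conv_rho[OF TC _ cT] by simp
  qed
  define C where "C = msum n (\<lambda>j. P ^\<^sub>m j * Fi) s"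
  have C_eq: "C = Fi * S"
  proof -
    have "P ^\<^sub>m j * Fi = Fi * R ^\<^sub>m j" for j
    proof -
      have "Fi * R ^\<^sub>m j = Fi * (F * (P ^\<^sub>m j * Fi))" unfolding RP by (simp add: asc cs PC)
      also have "\<dots> = P ^\<^sub>m j * Fi" by (rule cancel_l'[OF FiC FC _ FiF]) (simp add: cs PC)
      finally show ?thesis by simp
    qed
    hence "C = msum n (\<lambda>j. Fi * R ^\<^sub>m j) s" unfolding C_def by simp
    also have "\<dots> = Fi * S" unfolding S_def by (rule msum_left[OF FiC]) (simp add: RC)
    finally show ?thesis .
  qed
  have CC: "C \<in> carrier_mat n n" unfolding C_eq by (simp add: cs SC)
  have KA: "K * A = (I - B) * F"
  proof -
    have "K * A = K * U - K * V" unfolding AUV by (rule mult_minus_distrib_mat[OF KC UC VC])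
    also have "K * U = F" unfolding K_def using UiU right_mult_one_mat[OF FC] by (simp add: asc cs)
    finally have e1: "K * A = F - K * V" .
    have "(I - B) * F = I * F - B * F" by (rule minus_mult_distrib_mat[OF IC BC FC])
    also have "I * F = F" unfolding I_def using FC by simp
    also have "B * F = K * V" unfolding B_def W_def using FiF right_mult_one_mat[OF VC]
      by (simp add: asc cs KC)
    finally show ?thesis using e1 by simp
  qed
  have ITF: "I - T = Fi * ((I - T') * F)"
  proof -
    have "(I - T') * F = I * F - T' * F" by (rule minus_mult_distrib_mat[OF IC T'C FC])
    also have "I * F = F" unfolding I_def using FC by simp
    also have "Fi * (F - T' * F) = Fi * F - Fi * (T' * F)"
      by (rule mult_minus_distrib_mat[OF FiC FC]) (simp add: cs T'C)
    also have "Fi * (T' * F) = T" unfolding T_eq by (simp add: asc cs T'C)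
    finally show ?thesis using FiF unfolding I_def by simp
  qed
  have CA: "C * A = I - T"
  proof -
    have "C * A = Fi * ((I - Rs) * (K * A))" unfolding C_eq S_eq
      by (simp add: asc cs IC RsC KC)
    also have "\<dots> = Fi * (((I - Rs) * (I - B)) * F)" unfolding KA
      by (simp add: asc cs IC RsC BC)
    also have "\<dots> = I - T" unfolding ITF IT' ..
    finally show ?thesis .
  qed
  show "rho (two_stage_T n F G V s) < 1 \<and>
           (\<forall>b x0. b \<in> carrier_vec n \<longrightarrow> x0 \<in> carrier_vec n \<longrightarrow>
              (\<forall>i<n. (\<lambda>k. two_stage_iter n F G V s b x0 k $ i) \<longlonglongrightarrow> (minv A *\<^sub>v b) $ i))"
  proof (intro conjI allI impI)
    show "rho (two_stage_T n F G V s) < 1" using rhoT unfolding T_def .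
  next
    fix b x0 :: "real vec" and i assume b: "b \<in> carrier_vec n" and x0: "x0 \<in> carrier_vec n" and i: "i < n"
    define xs where "xs = Ai *\<^sub>v b"
    have xsC: "xs \<in> carrier_vec n" unfolding xs_def using AiC b by simp
    define c where "c = two_stage_c n F G s b"
    have c_eq: "c = C *\<^sub>v b" unfolding c_def two_stage_c_def C_def P_def Fi_def ..
    have bA: "b = A *\<^sub>v xs" unfolding xs_def
      using assoc_mult_mat_vec[OF AC AiC b, symmetric] AAi b by simp
    have "c = (C * A) *\<^sub>v xs" unfolding c_eq bA by (rule assoc_mult_mat_vec[symmetric, OF CC AC xsC])
    also have "\<dots> = I *\<^sub>v xs - T *\<^sub>v xs" unfolding CA by (rule minus_mult_distrib_mat_vec[OF IC TC xsC])
    finally have c_eq2: "c = xs - T *\<^sub>v xs" unfolding I_def using xsC by simp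
    have TxsC: "T *\<^sub>v xs \<in> carrier_vec n" using TC xsC by simp
    have fixp: "T *\<^sub>v xs + c = xs" unfolding c_eq2
    proof (rule eq_vecI)
      fix j assume "j < dim_vec xs"
      hence j: "j < n" using xsC by simp
      have d1: "dim_vec (T *\<^sub>v xs) = n" "dim_vec xs = n" using TxsC xsC TC by auto
      show "(T *\<^sub>v xs + (xs - T *\<^sub>v xs)) $ j = xs $ j" using j d1 by simp
    qed (use TxsC xsC TC in simp)
    define d where "d = x0 - xs"
    have dC: "d \<in> carrier_vec n" unfolding d_def using x0 xsC by (simp add: minus_carrier_vec)
    have it: "two_stage_iter n F G V s b x0 k = T ^\<^sub>m k *\<^sub>v d + xs" for k
    proof (induct k)
      case 0
      show ?case unfolding two_stage_iter_def d_def using x0 xsC TC dC[unfolded d_def] by (intro eq_vecI) auto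
    next
      case (Suc k)
      have TkdC: "T ^\<^sub>m k *\<^sub>v d \<in> carrier_vec n" by (rule mult_mat_vec_carrier[OF pow_carrier_mat[OF TC] dC])
      have "two_stage_iter n F G V s b x0 (Suc k) = T *\<^sub>v two_stage_iter n F G V s b x0 k + c"
        unfolding two_stage_iter_def c_def T_def by simp
      also have "\<dots> = T *\<^sub>v (T ^\<^sub>m k *\<^sub>v d) + T *\<^sub>v xs + c"
        unfolding Suc by (simp add: mult_add_distrib_mat_vec[OF TC TkdC xsC])
      also have "T *\<^sub>v (T ^\<^sub>m k *\<^sub>v d) = T ^\<^sub>m Suc k *\<^sub>v d"
        using assoc_mult_mat_vec[OF TC pow_carrier_mat[OF TC, of k] dC] pow_commute[OF TC, of k] by simp
      also have "T ^\<^sub>m Suc k *\<^sub>v d + T *\<^sub>v xs + c = T ^\<^sub>m Suc k *\<^sub>v d + (T *\<^sub>v xs + c)"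
      proof (rule assoc_add_vec[of _ n])
        show "T ^\<^sub>m Suc k *\<^sub>v d \<in> carrier_vec n" by (rule mult_mat_vec_carrier[OF pow_carrier_mat[OF TC] dC])
        show "T *\<^sub>v xs \<in> carrier_vec n" by (rule TxsC)
        show "c \<in> carrier_vec n" unfolding c_eq2 using xsC TxsC by simp
      qed
      finally show ?case unfolding fixp .
    qed
    have "(\<lambda>k. (T ^\<^sub>m k *\<^sub>v d) $ i) \<longlonglongrightarrow> 0"
      by (rule lim_vec[OF dC _ _ i]) (use TC cT in \<open>auto simp: conv_mat_def\<close>)
    hence "(\<lambda>k. (T ^\<^sub>m k *\<^sub>v d) $ i + xs $ i) \<longlonglongrightarrow> 0 + xs $ i"
      by (intro tendsto_add tendsto_const)
    moreover have "two_stage_iter n F G V s b x0 k $ i = (T ^\<^sub>m k *\<^sub>v d) $ i + xs $ i" for k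
      unfolding it using i xsC by simp
    ultimately show "(\<lambda>k. two_stage_iter n F G V s b x0 k $ i) \<longlonglongrightarrow> (minv A *\<^sub>v b) $ i"
      unfolding xs_def Ai_def by simp
  qed
qed

end
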